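(* (i) For all $a,\ell>0$: $\kappa\in(0,1)$, $$r_0(a,\ell)\approx\frac{\ell}{\langle a\sqrt\ell\rangle},\quad\kappa(a,\ell)\approx\langle a\sqrt\ell\rangle^{-1},\quad p(a,\ell)\approx\frac1{a^2}\langle a\sqrt\ell\rangle,\quad\frac1{1-\kappa}\approx\Big\langle\frac1{a^2\ell}\Big\rangle,\quad a\ell\kappa^2\approx\min\Big\{a\ell,\frac1a\Big\}.$$ (ii) For all $(\theta,a,\ell)\in\mathbb R\times(0,\infty)^2$, with $R=R(\theta,a,\ell)$: $$R\ge r_0=p(1-\kappa),\qquad\frac Rp+\kappa\approx\Big\langle\frac Rp\Big\rangle,\qquad\Big|\frac Rp+\kappa-\frac{|\theta|}{p}\Big|\lesssim\ln\Big\langle\frac Rp\Big\rangle,\qquad|\theta|\lesssim R\lesssim p+|\theta|.$$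
   Context: Fix $m>0$. For $a,\ell>0$: $\kappa(a,\ell)=(1+4a^2\ell/m^2)^{-1/2}$, $p(a,\ell)=\frac{m}{2a^2\kappa(a,\ell)}$, $r_0(a,\ell)=\frac{m}{2a^2}\big(\sqrt{1+4a^2\ell/m^2}-1\big)$. For $\kappa\in(0,1)$, $G_\kappa(x)=\sqrt{x^2-1}-\kappa\ln(x+\sqrt{x^2-1})$ on $[1,\infty)$, $H_\kappa=G_\kappa^{-1}:[0,\infty)\to[1,\infty)$, and $R(\theta,a,\ell)=pH_\kappa(|\theta|/p)-p\kappa$. $\langle x\rangle=(2+|x|^2)^{1/2}$. $A\lesssim B$ means $A\le CB$ with $C$ independent of $\theta,a,\ell$ (possibly depending on $m$); $A\approx B$ means $A\lesssim B$ and $B\lesssim A$. *)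

theory Defs
  imports "HOL-Analysis.Analysis"
begin

definition kap :: "real \<Rightarrow> real \<Rightarrow> real \<Rightarrow> real" where
  "kap m a l = 1 / sqrt (1 + 4 * a^2 * l / m^2)"

definition pp :: "real \<Rightarrow> real \<Rightarrow> real \<Rightarrow> real" where
  "pp m a l = m / (2 * a^2 * kap m a l)"

definition r0 :: "real \<Rightarrow> real \<Rightarrow> real \<Rightarrow> real" where
  "r0 m a l = m / (2 * a^2) * (sqrt (1 + 4 * a^2 * l / m^2) - 1)"

definition G :: "real \<Rightarrow> real \<Rightarrow> real" where
  "G \<kappa> x = sqrt (x^2 - 1) - \<kappa> * ln (x + sqrt (x^2 - 1))"

definition H :: "real \<Rightarrow> real \<Rightarrow> real" where
  "H \<kappa> y = the_inv_into {1..} (G \<kappa>) y"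

definition RR :: "real \<Rightarrow> real \<Rightarrow> real \<Rightarrow> real \<Rightarrow> real" where
  "RR m \<theta> a l = pp m a l * H (kap m a l) (\<bar>\<theta>\<bar> / pp m a l) - pp m a l * kap m a l"

definition jb :: "real \<Rightarrow> real" where
  "jb x = sqrt (2 + x^2)"

end

theory Submission
  imports Defs
begin


lemma sinh_ge_self: "0 \<le> (u::real) \<Longrightarrow> u \<le> sinh u"
proof -
  assume "0 \<le> u"
  have "(\<lambda>x. sinh x - x) 0 \<le> (\<lambda>x. sinh x - x) u"
    by (rule DERIV_nonneg_imp_nondecreasing[OF \<open>0 \<le> u\<close>])
       (auto intro!: derivative_eq_intros exI simp: cosh_real_ge_1)
  then show ?thesis by simp
qed

definition ff :: "real \<Rightarrow> real \<Rightarrow> real" where "ff k u = sinh u - k * u"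

lemma ff_strict: "k < 1 \<Longrightarrow> u < v \<Longrightarrow> ff k u < ff k v"
  unfolding ff_def
  by (rule DERIV_pos_imp_increasing[where f="\<lambda>x. sinh x - k*x"])
     (auto intro!: derivative_eq_intros exI simp: intro: less_le_trans[OF _ cosh_real_ge_1])

lemma G_cosh: "0 \<le> u \<Longrightarrow> G k (cosh u) = ff k u"
proof -
  assume u: "0 \<le> u"
  have "sqrt ((cosh u)^2 - 1) = sinh u" using u by (simp add: cosh_square_eq)
  moreover have "ln (cosh u + sinh u) = u" by (simp add: cosh_plus_sinh)
  ultimately show ?thesis by (simp add: G_def ff_def)
qed

lemma G_inj: "k < 1 \<Longrightarrow> inj_on (G k) {1..}"
proof (rule inj_onI)
  fix x y assume k: "k < 1" and x: "x \<in> {1..}" and y: "y \<in> {1..}" and e: "G k x = G k y"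
  define u v where "u = arcosh x" and "v = arcosh y"
  have u0: "u \<ge> 0" and v0: "v \<ge> 0" and xu: "x = cosh u" and yv: "y = cosh v"
    using x y by (auto simp: u_def v_def)
  have "ff k u = ff k v" using e G_cosh u0 v0 xu yv by simp
  then have "u = v" using ff_strict[OF k, of u v] ff_strict[OF k, of v u]
    by (cases u v rule: linorder_cases) auto
  then show "x = y" using xu yv by simp
qed

lemma ff_surj: "0 < k \<Longrightarrow> k < 1 \<Longrightarrow> 0 \<le> y \<Longrightarrow> \<exists>u\<ge>0. ff k u = y"
proof -
  assume k: "0 < k" "k < 1" and y: "0 \<le> y"
  define b where "b = y / (1 - k)"
  have b0: "0 \<le> b" using k y by (simp add: b_def)
  have "y = (1 - k) * b" using k by (simp add: b_def)
  also have "\<dots> \<le> ff k b" using sinh_ge_self[OF b0] by (simp add: ff_def algebra_simps)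
  finally have "y \<le> ff k b" .
  moreover have "ff k 0 \<le> y" using y by (simp add: ff_def)
  moreover have "\<forall>x. 0 \<le> x \<and> x \<le> b \<longrightarrow> isCont (ff k) x"
    unfolding ff_def by (auto intro!: continuous_intros isCont_sinh)
  ultimately obtain u where "0 \<le> u" "u \<le> b" "ff k u = y"
    using IVT[of "ff k" 0 y b] b0 by blast
  then show ?thesis by blast
qed

lemma H_eq: "0 < k \<Longrightarrow> k < 1 \<Longrightarrow> 0 \<le> y \<Longrightarrow> \<exists>u\<ge>0. ff k u = y \<and> H k y = cosh u"
proof -
  assume k: "0 < k" "k < 1" and y: "0 \<le> y"
  obtain u where u: "u \<ge> 0" "ff k u = y" using ff_surj[OF k y] by blast
  have "H k y = cosh u" unfolding H_def
    by (rule the_inv_into_f_eq[OF G_inj[OF k(2)]]) (use u G_cosh cosh_real_ge_1 in auto)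
  then show ?thesis using u by blast
qed

lemma arith_core:
  fixes EE ee ss cc u k :: real
  assumes h: "2* ss = EE - ee" "2* cc = EE + ee" "EE \<ge> 1 + u" "ee \<ge> 1 - u" "ee \<le> 1"
    "EE \<ge> 1 + u + u^2/2" "0 < k" "k < 1" "u \<ge> 0" "ee > 0"
  shows "ss - k*u \<le> 2*(cc - k)" "cc - k \<le> 4*(1 + (ss - k*u))"
proof -
  have a1: "2* cc - ss \<ge> 2 - u" using h by linarith
  have a2: "2* cc - ss \<ge> 0" using h by linarith
  have "k * (2 - u) \<le> max (2 - u) 0" using h
    by (cases "u \<le> 2") (auto simp: mult_left_le_one_le mult_nonneg_nonpos)
  then have "k*(2-u) \<le> 2* cc - ss" using a1 a2 by linarith
  moreover have "k*(2-u) = 2*k - k*u" by (simp add: algebra_simps)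
  ultimately show "ss - k*u \<le> 2*(cc - k)" by (smt (verit))
  define w where "w = u^2"
  have w: "EE \<ge> 1 + u + w/2" using h(6) by (simp add: w_def)
  have sl: "2 * ss \<ge> u + w/2" using w h(1) h(5) by linarith
  have "(u - 5/3)^2 = w - 10/3 * u + 25/9" by (simp add: w_def power2_eq_square algebra_simps)
  moreover have "(u - 5/3)^2 \<ge> 0" by simp
  ultimately have w2: "w - 10/3 * u + 25/9 \<ge> 0" by simp
  have ku: "k * u \<le> u" using h by (simp add: mult_left_le_one_le)
  have "4 * u \<le> 3 + 3 * ss" using sl w2 by linarith
  moreover obtain v where v: "v = k * u" by blast
  ultimately have "cc - k \<le> 4*(1 + (ss - v))" using ku h by (smt (verit))
  then show "cc - k \<le> 4*(1 + (ss - k*u))" using v by simp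
qed

lemma core2:
  fixes k u y X :: real
  assumes k: "0 < k" "k < 1" and u: "0 \<le> u" and y: "y = ff k u" and X: "X = cosh u - k"
  shows "X + k \<le> 2 * jb X" "jb X \<le> 2 * (X + k)"
    "\<bar>X + k - y\<bar> \<le> 21 * ln (jb X)" "y \<le> 2 * X" "X \<le> 4 * (1 + y)"
proof -
  define c where "c = cosh u"
  have c1: "c \<ge> 1" using cosh_real_ge_1 by (simp add: c_def)
  have X0: "X \<ge> 0" "X \<ge> c - 1" "X \<le> c" using X c1 k by (auto simp: c_def)
  have Jsq: "(jb X)^2 = 2 + X^2" by (simp add: jb_def)
  have J0: "jb X \<ge> 0" by (simp add: jb_def)
  have "c^2 \<le> 2 * (2 + X^2)"
  proof -
    have h: "(c-1)^2 \<le> X^2" using X0 c1 by (intro power_mono) auto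
    have e1: "(c-1)^2 = c^2 - 2*c + 1" and e2: "(c-2)^2 = c^2 - 4*c + 4"
      by (simp_all add: power2_eq_square algebra_simps)
    have "(c-2)^2 \<ge> 0" by simp
    then show ?thesis using h e1 e2 by (smt (verit))
  qed
  then have "c^2 \<le> 4 * (2 + X^2)" by (smt (verit) zero_le_power2)
  also have "4 * (2 + X^2) = (2 * jb X)^2" using Jsq by (simp add: power_mult_distrib)
  finally have "c^2 \<le> (2 * jb X)^2" .
  then have cJ: "c \<le> 2 * jb X" by (rule power2_le_imp_le) (simp add: J0)
  have Xk: "X + k = c" using X by (simp add: c_def)
  then show "X + k \<le> 2 * jb X" using cJ by simp
  have "(jb X)^2 \<le> (2 * (X + k))^2"
  proof -
    have "X^2 \<le> c^2" using X0 by (intro power_mono) auto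
    moreover have "1 \<le> c^2" using c1 by (simp add: one_le_power)
    ultimately have "2 + X^2 \<le> 4 * c^2" by linarith
    moreover have "(2 * (X + k))^2 = 4 * c^2" unfolding Xk by (simp add: power_mult_distrib)
    ultimately show ?thesis using Jsq by simp
  qed
  then show "jb X \<le> 2 * (X + k)" by (rule power2_le_imp_le) (use X0 k in simp)
  have d: "X + k - y = exp (-u) + k * u" using X y by (simp add: ff_def cosh_minus_sinh[symmetric])
  have "X + k - y \<ge> 0" using d k u by simp
  moreover have "X + k - y \<le> 1 + u"
  proof -
    have "exp (-u) \<le> 1" using u by simp
    moreover have "k * u \<le> u" using k u by (simp add: mult_left_le_one_le)
    ultimately show ?thesis using d by linarith
  qed
  moreover have "1 + u \<le> 21 * ln (jb X)"
  proof -
    have s2: "sqrt 2 \<ge> 7/5" by (rule real_le_rsqrt) (simp add: power2_eq_square)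
    have "sqrt 2 \<le> jb X" unfolding jb_def by (rule real_sqrt_le_mono) simp
    then have Jge: "jb X \<ge> 7/5" using s2 by linarith
    have "ln (1 / jb X) \<le> 1 / jb X - 1" using Jge by (intro ln_le_minus_one) simp
    then have l1: "ln (jb X) \<ge> 1 - 1 / jb X" using Jge by (simp add: ln_div)
    have "1 / jb X \<le> 5/7" using Jge by (simp add: divide_simps)
    then have lJ: "ln (jb X) \<ge> 2/7" using l1 by linarith
    have "exp u \<le> 2 * c" using cosh_plus_sinh[of u] sinh_le_cosh_real[of u] by (simp add: c_def)
    then have "exp u \<le> 4 * jb X" using cJ by linarith
    then have "u \<le> ln (4 * jb X)" using Jge by (subst ln_ge_iff) auto
    also have "\<dots> = ln 4 + ln (jb X)" using Jge by (simp add: ln_mult)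
    finally have u4: "u \<le> ln 4 + ln (jb X)" .
    have l4: "ln (4::real) < 4" by (rule ln_less_self) simp
    show ?thesis using u4 l4 lJ by linarith
  qed
  ultimately show "\<bar>X + k - y\<bar> \<le> 21 * ln (jb X)" by simp
  have e1: "exp u \<ge> 1 + u" by simp
  have e2: "exp (-u) \<ge> 1 - u" using exp_ge_add_one_self[of "-u"] by simp
  have e3: "exp (-u) \<le> 1" using u by simp
  have e4: "exp (-u) > 0" by simp
  have sh: "2 * sinh u = exp u - exp (-u)"
    using cosh_plus_sinh[of u] cosh_minus_sinh[of u] by (smt (verit))
  have ch: "2 * cosh u = exp u + exp (-u)"
    using cosh_plus_sinh[of u] cosh_minus_sinh[of u] by (smt (verit))
  have q: "exp u \<ge> 1 + u + u^2/2" using u by (rule exp_lower_Taylor_quadratic)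
  note ac = arith_core[OF sh ch e1 e2 e3 q k u e4]
  show "y \<le> 2 * X" using ac(1) unfolding X y ff_def .
  show "X \<le> 4 * (1 + y)" using ac(2) unfolding X y ff_def .
qed



lemma le_C: "(x::real) \<le> c * X \<Longrightarrow> c \<le> C \<Longrightarrow> 0 \<le> X \<Longrightarrow> x \<le> C * X"
  by (meson mult_right_mono order_trans)

locale pos3 =
  fixes m a l :: real
  assumes m: "m > 0" and a: "a > 0" and l: "l > 0"
begin

definition "K = sqrt (1 + 4 * a^2 * l / m^2)"
definition "J = sqrt (2 + a^2 * l)"
definition "t = a^2 * l"

lemma t_pos: "t > 0" using a l by (simp add: t_def)
lemma K_sq: "K^2 = 1 + 4 * t / m^2" unfolding K_def t_def using a l m by simp
lemma K_gt1: "K > 1"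
proof -
  have "1 < 1 + 4 * a^2 * l / m^2" using a l m by simp
  then show ?thesis unfolding K_def by simp
qed
lemma J_sq: "J^2 = 2 + t" unfolding J_def t_def using a l by simp
lemma J_pos: "J > 0" unfolding J_def using a l by (simp add: add_pos_nonneg)
lemma J_ge1: "J \<ge> 1" unfolding J_def using a l by simp
lemma jb_J: "jb (a * sqrt l) = J" unfolding jb_def J_def using l by (simp add: power_mult_distrib)
lemma kap_K: "kap m a l = 1 / K" unfolding kap_def K_def ..
lemma pp_K: "pp m a l = m * K / (2 * a^2)" unfolding pp_def kap_K by simp
lemma r0_K: "r0 m a l = m / (2 * a^2) * (K - 1)" unfolding r0_def K_def ..
lemma KK: "(K - 1) * (K + 1) = 4 * t / m^2"
  using K_sq by (simp add: algebra_simps power2_eq_square)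
lemma r0_alt: "r0 m a l = 2 * l / (m * (K + 1))"
proof -
  have "r0 m a l = m / (2 * a^2) * ((K - 1) * (K + 1)) / (K + 1)" using K_gt1 by (simp add: r0_K)
  also have "\<dots> = m / (2 * a^2) * (4 * t / m^2) / (K + 1)" by (simp only: KK)
  also have "\<dots> = 2 * l / (m * (K + 1))" using a m K_gt1 by (simp add: t_def field_simps power2_eq_square)
  finally show ?thesis .
qed

definition "A = sqrt (2 + m^2/4)"
definition "B = sqrt (1 + 4/m^2)"
lemma A_pos: "A > 0" unfolding A_def by (simp add: add_pos_nonneg)
lemma B_pos: "B > 0" unfolding B_def by (simp add: add_pos_nonneg)

lemma A_sq: "A^2 = 2 + m^2/4" unfolding A_def by (simp add: add_nonneg_nonneg)
lemma B_sq: "B^2 = 1 + 4/m^2" unfolding B_def by (simp add: add_nonneg_nonneg)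

lemma J_le_AK: "J \<le> A * K"
proof -
  have e: "(A*K)^2 = (2 + m^2/4) * (1 + 4 * t / m^2)"
    by (simp only: power_mult_distrib A_sq K_sq)
  have "(2 + m^2/4) * (1 + 4 * t / m^2) = 2 + t + 8*t/m^2 + m^2/4"
    using m by (simp add: field_simps)
  moreover have "8*t/m^2 \<ge> 0" "m^2/4 \<ge> 0" using t_pos by auto
  ultimately have "J^2 \<le> (A*K)^2" using J_sq e by linarith
  moreover have "0 \<le> A * K" using A_pos K_gt1 by simp
  ultimately show ?thesis by (rule power2_le_imp_le)
qed

lemma K_le_BJ: "K \<le> B * J"
proof -
  have e: "(B*J)^2 = (1 + 4/m^2) * (2 + t)"
    by (simp only: power_mult_distrib B_sq J_sq)
  have "(1 + 4/m^2) * (2 + t) = 2 + t + 8/m^2 + 4*t/m^2"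
    using m by (simp add: field_simps)
  moreover have "8/m^2 \<ge> 0" "t \<ge> 0" using t_pos by auto
  ultimately have "K^2 \<le> (B*J)^2" using K_sq e by linarith
  moreover have "0 \<le> B * J" using B_pos J_pos by simp
  ultimately show ?thesis by (rule power2_le_imp_le)
qed

lemma frac_aux: "0 < x \<Longrightarrow> 0 < y \<Longrightarrow> y \<le> c * x \<Longrightarrow> 1 / x \<le> c / (y::real)"
  by (simp add: divide_simps mult.commute)

lemma i1: "r0 m a l \<le> (2 * A / m) * (l / J)"
proof -
  have "J \<le> A * (K + 1)" using J_le_AK A_pos by (simp add: algebra_simps)
  then have "1 / (K + 1) \<le> A / J" using K_gt1 J_pos by (intro frac_aux) auto
  then have "(2 * l / m) * (1 / (K + 1)) \<le> (2 * l / m) * (A / J)" using l m by (intro mult_left_mono) auto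
  then show ?thesis unfolding r0_alt by (simp add: field_simps)
qed

lemma i2: "l / J \<le> (m * B) * r0 m a l"
proof -
  have "K + 1 \<le> 2 * B * J" using K_le_BJ K_gt1 by simp
  then have "1 / J \<le> (2 * B) / (K + 1)" using K_gt1 J_pos by (intro frac_aux) auto
  then have "l * (1 / J) \<le> l * ((2 * B) / (K + 1))" using l by (intro mult_left_mono) auto
  moreover have "(m * B) * (2 * l / (m * (K + 1))) = l * ((2 * B) / (K + 1))" using m by simp
  ultimately show ?thesis unfolding r0_alt by simp
qed

lemma i3: "kap m a l \<le> A * (1 / J)"
  unfolding kap_K using frac_aux[of K J A] K_gt1 J_pos J_le_AK by simp

lemma i4: "1 / J \<le> B * kap m a l"
  unfolding kap_K using frac_aux[of J K B] K_gt1 J_pos K_le_BJ by simp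

lemma i5: "pp m a l \<le> (m * B / 2) * (J / a^2)"
proof -
  have "(m / (2 * a^2)) * K \<le> (m / (2 * a^2)) * (B * J)" using K_le_BJ m a by (intro mult_left_mono) auto
  then show ?thesis unfolding pp_K by (simp add: field_simps)
qed

lemma i6: "J / a^2 \<le> (2 * A / m) * pp m a l"
proof -
  have "(1 / a^2) * J \<le> (1 / a^2) * (A * K)" using J_le_AK a by (intro mult_left_mono) auto
  then show ?thesis unfolding pp_K using m by (simp add: field_simps)
qed

lemma Q_eq: "1 / (1 - kap m a l) = K * (K + 1) * m^2 / (4 * t)"
proof -
  have "1 / (1 - kap m a l) = K / (K - 1)" unfolding kap_K using K_gt1 by (simp add: field_simps)
  also have "\<dots> = K * (K + 1) / ((K - 1) * (K + 1))" using K_gt1 by simp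
  also have "\<dots> = K * (K + 1) * m^2 / (4 * t)" unfolding KK using m t_pos by (simp add: field_simps)
  finally show ?thesis .
qed

lemma jbt: "jb (1 / (a^2 * l)) \<ge> 1 / t" "jb (1 / (a^2 * l)) \<ge> 1" "jb (1 / (a^2 * l)) \<le> 2 + 1 / t"
proof -
  have t0: "1 / t > 0" using t_pos by simp
  show "jb (1 / (a^2 * l)) \<ge> 1 / t" unfolding jb_def t_def[symmetric]
    by (rule real_le_rsqrt) simp
  show "jb (1 / (a^2 * l)) \<ge> 1" unfolding jb_def t_def[symmetric]
    by (rule real_le_rsqrt) simp
  have "2 + (1/t)^2 \<le> (2 + 1/t)^2" using t0 by (simp add: power2_eq_square algebra_simps)
  then have "sqrt (2 + (1/t)^2) \<le> sqrt ((2 + 1/t)^2)" by (rule real_sqrt_le_mono)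
  also have "\<dots> = 2 + 1/t" using t0 by simp
  finally show "jb (1 / (a^2 * l)) \<le> 2 + 1 / t" unfolding jb_def t_def[symmetric] .
qed

lemma i7: "1 / (1 - kap m a l) \<le> (m^2/2 + 2) * jb (1 / (a^2 * l))"
proof -
  have "K * (K + 1) \<le> 2 * K^2" using K_gt1 by (simp add: power2_eq_square algebra_simps)
  also have "\<dots> = 2 + 8 * t / m^2" unfolding K_sq by simp
  finally have "K * (K + 1) * m^2 / (4 * t) \<le> (2 + 8 * t / m^2) * m^2 / (4 * t)"
    using m t_pos by (intro divide_right_mono mult_right_mono) auto
  also have "\<dots> = (m^2/2) * (1/t) + 2" using m t_pos by (simp add: field_simps)
  also have "\<dots> \<le> (m^2/2) * jb (1 / (a^2 * l)) + 2 * jb (1 / (a^2 * l))"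
    using jbt(1,2) by (intro add_mono mult_left_mono) auto
  finally show ?thesis unfolding Q_eq by (simp add: algebra_simps)
qed

lemma i8: "jb (1 / (a^2 * l)) \<le> (2 + 2/m^2) * (1 / (1 - kap m a l))"
proof -
  let ?Q = "1 / (1 - kap m a l)"
  have Q1: "?Q \<ge> 1" unfolding kap_K using K_gt1 by (simp add: field_simps)
  have "2 * m^2 / (4 * t) \<le> K * (K + 1) * m^2 / (4 * t)"
  proof -
    have "1 * 2 \<le> K * (K + 1)" using K_gt1 by (intro mult_mono) auto
    then have "2 \<le> K * (K + 1)" by simp
    then show ?thesis using m t_pos by (intro divide_right_mono mult_right_mono) auto
  qed
  then have Q2: "?Q \<ge> m^2 / (2 * t)" unfolding Q_eq by simp
  have "jb (1 / (a^2 * l)) \<le> 2 + 1 / t" by (rule jbt(3))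
  also have "1 / t = (2 / m^2) * (m^2 / (2 * t))" using m t_pos by (simp add: field_simps)
  also have "2 + \<dots> \<le> 2 * ?Q + (2 / m^2) * ?Q" using Q1 Q2 m
    by (intro add_mono mult_left_mono) auto
  finally show ?thesis by (simp add: algebra_simps)
qed

lemma invK2: "(kap m a l)^2 = m^2 / (m^2 + 4 * t)"
proof -
  have "K^2 = (m^2 + 4 * t) / m^2" using K_sq m by (simp add: field_simps)
  moreover have "(kap m a l)^2 = 1 / K^2" unfolding kap_K by (simp add: power_divide)
  ultimately show ?thesis by simp
qed

lemma i9: "a * l * (kap m a l)^2 \<le> (1 + m^2/4) * min (a * l) (1 / a)"
proof -
  have al: "a * l > 0" using a l by simp
  have "a * l * (kap m a l)^2 = a * l * m^2 / (m^2 + 4 * t)" unfolding invK2 by simp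
  also have "\<dots> \<le> a * l"
  proof -
    have "a * l * m^2 \<le> a * l * (m^2 + 4 * t)" using al t_pos by (intro mult_left_mono) auto
    then show ?thesis using m t_pos by (simp add: pos_divide_le_eq add_pos_nonneg)
  qed
  finally have h1: "a * l * (kap m a l)^2 \<le> a * l" .
  have "a * l * (kap m a l)^2 = a * l * m^2 / (m^2 + 4 * t)" unfolding invK2 by simp
  also have "\<dots> \<le> a * l * m^2 / (4 * t)" using al m t_pos
    by (intro divide_left_mono) (auto simp: add_pos_nonneg)
  also have "\<dots> = (m^2/4) * (1 / a)" using a l by (simp add: t_def field_simps power2_eq_square)
  finally have h2: "a * l * (kap m a l)^2 \<le> (m^2/4) * (1 / a)" .
  show ?thesis
  proof (cases "a * l \<le> 1 / a")
    case True
    then have "min (a * l) (1 / a) = a * l" by simp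
    moreover have "a * l \<le> (1 + m^2/4) * (a * l)" using al
      by (intro mult_right_mono[of 1 _ "a * l", simplified]) auto
    ultimately show ?thesis using h1 by linarith
  next
    case False
    then have "min (a * l) (1 / a) = 1 / a" by simp
    moreover have "(m^2/4) * (1 / a) \<le> (1 + m^2/4) * (1 / a)" using a by (simp add: divide_simps)
    ultimately show ?thesis using h2 by simp
  qed
qed

lemma i10: "min (a * l) (1 / a) \<le> ((m^2 + 4) / m^2) * (a * l * (kap m a l)^2)"
proof -
  have al: "a * l > 0" using a l by simp
  have m2: "m^2 > 0" using m by simp
  have d: "m^2 + 4 * t > 0" using m2 t_pos by (simp add: add_pos_pos)
  have eq: "((m^2 + 4) / m^2) * (a * l * (kap m a l)^2) = a * l * (m^2 + 4) / (m^2 + 4 * t)"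
  proof -
    have "((m^2 + 4) / m^2) * (a * l * (m^2 / (m^2 + 4 * t))) = a * l * (m^2 + 4) / (m^2 + 4 * t)"
      using m2 d by (simp add: divide_simps)
    then show ?thesis unfolding invK2 .
  qed
  show ?thesis
  proof (cases "t \<le> 1")
    case True
    have "a * l * (m^2 + 4 * t) \<le> a * l * (m^2 + 4)" using al True by (intro mult_left_mono) auto
    then have "a * l * (m^2 + 4 * t) / (m^2 + 4 * t) \<le> a * l * (m^2 + 4) / (m^2 + 4 * t)"
      using d by (intro divide_right_mono) auto
    then have "a * l \<le> a * l * (m^2 + 4) / (m^2 + 4 * t)" using d by simp
    then show ?thesis using eq by simp
  next
    case False
    have "(m^2 + 4 * t) \<le> (m^2 + 4) * t" using False m2
      by (simp add: algebra_simps)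
    then have "a * l * (m^2 + 4) / ((m^2 + 4) * t) \<le> a * l * (m^2 + 4) / (m^2 + 4 * t)"
      using al m2 t_pos d by (intro divide_left_mono) auto
    moreover have "a * l * (m^2 + 4) / ((m^2 + 4) * t) = a * l / t"
    proof -
      have "m^2 + 4 > 0" using m2 by linarith
      then have "m^2 + 4 \<noteq> 0" by linarith
      then show ?thesis by simp
    qed
    moreover have "a * l / t = 1 / a" using a l by (simp add: t_def power2_eq_square)
    ultimately show ?thesis using eq by simp
  qed
qed


lemma kap_bounds: "0 < kap m a l" "kap m a l < 1"
  unfolding kap_K using K_gt1 by auto

lemma r0_eq: "r0 m a l = pp m a l * (1 - kap m a l)"
  unfolding r0_K pp_K kap_K using K_gt1 a m by (simp add: field_simps)

lemma pp_pos: "pp m a l > 0" unfolding pp_K using m a K_gt1 by simp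

lemma part2:
  fixes \<theta> :: real
  defines "R \<equiv> RR m \<theta> a l" and "p \<equiv> pp m a l" and "k \<equiv> kap m a l"
  shows "R \<ge> r0 m a l"
    "R / p + k \<le> 21 * jb (R / p)" "jb (R / p) \<le> 21 * (R / p + k)"
    "\<bar>R / p + k - \<bar>\<theta>\<bar> / p\<bar> \<le> 21 * ln (jb (R / p))"
    "\<bar>\<theta>\<bar> \<le> 21 * R" "R \<le> 21 * (p + \<bar>\<theta>\<bar>)"
proof -
  have p0: "p > 0" using pp_pos by (simp add: p_def)
  have k: "0 < k" "k < 1" using kap_bounds by (auto simp: k_def)
  have y0: "0 \<le> \<bar>\<theta>\<bar> / p" using p0 by simp
  obtain u where u: "u \<ge> 0" "ff k u = \<bar>\<theta>\<bar> / p" "H k (\<bar>\<theta>\<bar> / p) = cosh u"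
    using H_eq[OF k y0] by blast
  define X where "X = cosh u - k"
  have RX: "R = p * X" unfolding R_def RR_def X_def using u(3) by (simp add: p_def k_def algebra_simps)
  have Rp: "R / p = X" using RX p0 by simp
  note c = core2[OF k u(1) u(2)[symmetric] X_def]
  have jb0: "jb X \<ge> 0" by (simp add: jb_def)
  have X0: "X \<ge> 0" using X_def k cosh_real_ge_1[of u] by simp
  have ln0: "ln (jb X) \<ge> 0" unfolding jb_def by simp
  show "R / p + k \<le> 21 * jb (R / p)" using c(1) jb0 unfolding Rp by linarith
  have "2 * (X + k) \<le> 21 * (X + k)" using X0 k by simp
  then show "jb (R / p) \<le> 21 * (R / p + k)" using c(2) unfolding Rp by linarith
  show "\<bar>R / p + k - \<bar>\<theta>\<bar> / p\<bar> \<le> 21 * ln (jb (R / p))" using c(3) unfolding Rp by simp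
  have "\<bar>\<theta>\<bar> = p * (\<bar>\<theta>\<bar> / p)" using p0 by simp
  also have "\<dots> \<le> p * (2 * X)" using c(4) p0 by (intro mult_left_mono) auto
  also have "\<dots> = 2 * R" using RX by simp
  finally show "\<bar>\<theta>\<bar> \<le> 21 * R" using RX X0 p0 by simp
  have "R \<le> p * (4 * (1 + \<bar>\<theta>\<bar> / p))" unfolding RX using c(5) p0 by (intro mult_left_mono) auto
  also have "\<dots> = 4 * (p + \<bar>\<theta>\<bar>)" using p0 by (simp add: field_simps)
  finally show "R \<le> 21 * (p + \<bar>\<theta>\<bar>)" using p0 by simp
  have "X \<ge> 1 - k" using X_def cosh_real_ge_1[of u] by simp
  then have "p * (1 - k) \<le> R" unfolding RX using p0 by (intro mult_left_mono) auto
  then show "R \<ge> r0 m a l" using r0_eq by (simp add: p_def k_def)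
qed

end

theorem lemma2p12:
  fixes m :: real
  assumes "m > 0"
  shows "(\<forall>a l. a > 0 \<longrightarrow> l > 0 \<longrightarrow> 0 < kap m a l \<and> kap m a l < 1)
    \<and> (\<exists>C>0. \<forall>a l. a > 0 \<longrightarrow> l > 0 \<longrightarrow>
          r0 m a l \<le> C * (l / jb (a * sqrt l)) \<and> l / jb (a * sqrt l) \<le> C * r0 m a l
        \<and> kap m a l \<le> C * (1 / jb (a * sqrt l)) \<and> 1 / jb (a * sqrt l) \<le> C * kap m a l
        \<and> pp m a l \<le> C * (jb (a * sqrt l) / a^2) \<and> jb (a * sqrt l) / a^2 \<le> C * pp m a l
        \<and> 1 / (1 - kap m a l) \<le> C * jb (1 / (a^2 * l))
        \<and> jb (1 / (a^2 * l)) \<le> C * (1 / (1 - kap m a l))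
        \<and> a * l * (kap m a l)^2 \<le> C * min (a * l) (1 / a)
        \<and> min (a * l) (1 / a) \<le> C * (a * l * (kap m a l)^2))
    \<and> (\<forall>\<theta> a l. a > 0 \<longrightarrow> l > 0 \<longrightarrow>
          RR m \<theta> a l \<ge> r0 m a l \<and> r0 m a l = pp m a l * (1 - kap m a l))
    \<and> (\<exists>C>0. \<forall>\<theta> a l. a > 0 \<longrightarrow> l > 0 \<longrightarrow>
          (let R = RR m \<theta> a l; p = pp m a l; k = kap m a l in
             R / p + k \<le> C * jb (R / p) \<and> jb (R / p) \<le> C * (R / p + k)
           \<and> \<bar>R / p + k - \<bar>\<theta>\<bar> / p\<bar> \<le> C * ln (jb (R / p))
           \<and> \<bar>\<theta>\<bar> \<le> C * R \<and> R \<le> C * (p + \<bar>\<theta>\<bar>)))"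
  
proof -
  define Ac where "Ac = sqrt (2 + m^2/4)"
  define Bc where "Bc = sqrt (1 + 4/m^2)"
  have A0: "Ac > 0" unfolding Ac_def by (simp add: add_pos_nonneg)
  have B0: "Bc > 0" unfolding Bc_def by (simp add: add_pos_nonneg)
  have m2: "m^2 > 0" using assms by simp
  define C where "C = 2 * Ac / m + m * Bc + Ac + Bc + (m^2/2 + 2) + (2 + 2/m^2) + (1 + m^2/4) + (m^2 + 4) / m^2"
  have t1: "2 * Ac / m > 0" "m * Bc > 0" "m^2/2 + 2 > 0" "2 + 2/m^2 > 0" "1 + m^2/4 > 0" "(m^2 + 4) / m^2 > 0"
    using A0 B0 assms m2 by (auto simp: add_pos_pos)
  have Cge: "2 * Ac / m \<le> C" "m * Bc \<le> C" "Ac \<le> C" "Bc \<le> C" "m * Bc / 2 \<le> C"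
    "m^2/2 + 2 \<le> C" "2 + 2/m^2 \<le> C" "1 + m^2/4 \<le> C" "(m^2 + 4) / m^2 \<le> C"
    using t1 A0 B0 unfolding C_def by linarith+
  have C0: "C > 0" using t1 A0 B0 unfolding C_def by linarith
  have P1: "\<forall>a l. a > 0 \<longrightarrow> l > 0 \<longrightarrow> 0 < kap m a l \<and> kap m a l < 1"
    using pos3.kap_bounds pos3.intro assms by blast
  have P2: "\<forall>a l. a > 0 \<longrightarrow> l > 0 \<longrightarrow>
          r0 m a l \<le> C * (l / jb (a * sqrt l)) \<and> l / jb (a * sqrt l) \<le> C * r0 m a l
        \<and> kap m a l \<le> C * (1 / jb (a * sqrt l)) \<and> 1 / jb (a * sqrt l) \<le> C * kap m a l
        \<and> pp m a l \<le> C * (jb (a * sqrt l) / a^2) \<and> jb (a * sqrt l) / a^2 \<le> C * pp m a l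
        \<and> 1 / (1 - kap m a l) \<le> C * jb (1 / (a^2 * l))
        \<and> jb (1 / (a^2 * l)) \<le> C * (1 / (1 - kap m a l))
        \<and> a * l * (kap m a l)^2 \<le> C * min (a * l) (1 / a)
        \<and> min (a * l) (1 / a) \<le> C * (a * l * (kap m a l)^2)"
  proof (intro allI impI)
    fix a l :: real assume a: "a > 0" and l: "l > 0"
    interpret pos3 m a l using assms a l by unfold_locales
    have AA: "pos3.A m = Ac" and BB: "pos3.B m = Bc" unfolding Ac_def Bc_def A_def B_def by simp_all
    have J0: "J > 0" by (rule J_pos)
    have K1: "K > 1" by (rule K_gt1)
    have r00: "r0 m a l \<ge> 0" using r0_alt K1 assms l by simp
    have pp0: "pp m a l \<ge> 0" using pp_pos by simp
    have k0: "kap m a l \<ge> 0" using kap_bounds by simp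
    have Q0: "1 / (1 - kap m a l) \<ge> 0" using kap_bounds by simp
    have jbt0: "jb (1 / (a^2 * l)) \<ge> 0" by (simp add: jb_def)
    have min0: "min (a * l) (1 / a) \<ge> 0" using a l by simp
    have ak0: "a * l * (kap m a l)^2 \<ge> 0" using a l by simp
    show "r0 m a l \<le> C * (l / jb (a * sqrt l)) \<and> l / jb (a * sqrt l) \<le> C * r0 m a l
        \<and> kap m a l \<le> C * (1 / jb (a * sqrt l)) \<and> 1 / jb (a * sqrt l) \<le> C * kap m a l
        \<and> pp m a l \<le> C * (jb (a * sqrt l) / a^2) \<and> jb (a * sqrt l) / a^2 \<le> C * pp m a l
        \<and> 1 / (1 - kap m a l) \<le> C * jb (1 / (a^2 * l))
        \<and> jb (1 / (a^2 * l)) \<le> C * (1 / (1 - kap m a l))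
        \<and> a * l * (kap m a l)^2 \<le> C * min (a * l) (1 / a)
        \<and> min (a * l) (1 / a) \<le> C * (a * l * (kap m a l)^2)"
      unfolding jb_J
      using le_C[OF i1[unfolded AA] Cge(1)] le_C[OF i2[unfolded BB] Cge(2)]
        le_C[OF i3[unfolded AA] Cge(3)] le_C[OF i4[unfolded BB] Cge(4)]
        le_C[OF i5[unfolded BB] Cge(5)] le_C[OF i6[unfolded AA] Cge(1)]
        le_C[OF i7 Cge(6)] le_C[OF i8 Cge(7)] le_C[OF i9 Cge(8)] le_C[OF i10 Cge(9)]
        J0 l r00 k0 pp0 Q0 jbt0 min0 ak0 a
      by (simp add: less_imp_le)
  qed
  have P3: "\<forall>\<theta> a l. a > 0 \<longrightarrow> l > 0 \<longrightarrow>
          RR m \<theta> a l \<ge> r0 m a l \<and> r0 m a l = pp m a l * (1 - kap m a l)"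
    using pos3.part2(1) pos3.r0_eq pos3.intro assms by blast
  have P4: "\<forall>\<theta> a l. a > 0 \<longrightarrow> l > 0 \<longrightarrow>
          (let R = RR m \<theta> a l; p = pp m a l; k = kap m a l in
             R / p + k \<le> 21 * jb (R / p) \<and> jb (R / p) \<le> 21 * (R / p + k)
           \<and> \<bar>R / p + k - \<bar>\<theta>\<bar> / p\<bar> \<le> 21 * ln (jb (R / p))
           \<and> \<bar>\<theta>\<bar> \<le> 21 * R \<and> R \<le> 21 * (p + \<bar>\<theta>\<bar>))"
  proof (intro allI impI)
    fix \<theta> a l :: real assume a: "a > 0" and l: "l > 0"
    interpret pos3 m a l using assms a l by unfold_locales
    show "let R = RR m \<theta> a l; p = pp m a l; k = kap m a l in
             R / p + k \<le> 21 * jb (R / p) \<and> jb (R / p) \<le> 21 * (R / p + k)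
           \<and> \<bar>R / p + k - \<bar>\<theta>\<bar> / p\<bar> \<le> 21 * ln (jb (R / p))
           \<and> \<bar>\<theta>\<bar> \<le> 21 * R \<and> R \<le> 21 * (p + \<bar>\<theta>\<bar>)"
      unfolding Let_def using part2[of \<theta>] by blast
  qed
  show ?thesis
    apply (intro conjI)
       apply (rule P1)
      apply (rule exI[of _ C], rule conjI, rule C0, rule P2)
     apply (rule P3)
    apply (rule exI[of _ 21], rule conjI, simp, rule P4)
    done
qed

end
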